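(* Let $\phi:\mathbb{R}_+\to\mathbb{R}_+$ be non-negative continuous, $d\nu=\phi(r)\,dr$, and let $I,J,K,L$ be non-negative functions on $\mathbb{R}_+$ such that $I(ab)\le bJ(a)+K(aL(b))$ for all $a,b\ge0$, $J$ is a lower isoperimetric function for $\nu$, $K$ is non-decreasing and concave, and $L$ is concave. Then for every elementary step function $f=b\mathbf{1}_{[r,s)}$ with $b\ge0$ and $0\le r<s$, $$I\Big(\int_{\mathbb{R}_+}f\,d\nu\Big)\le K\Big(\int_{\mathbb{R}_+}L(f)\,d\nu\Big)+V_\nu(f).$$
   Context: $\mathbb{R}_+=[0,\infty)$. For Borel $A\subset\mathbb{R}_+$, $\nu^+(A)=\liminf_{r\to0^+}\frac{\nu(A^r)-\nu(A)}{r}$ with $A^r=\{x\in\mathbb{R}_+:\operatorname{dist}(x,A)<r\}$; $J$ is a lower isoperimetric function for $\nu$ if $\nu^+(A)\ge J(\nu(A))$ for all Borel $A$. For a real function $f$ on $\mathbb{R}_+$ with bounded support, the weighted total variation is $V_\nu(f)=\sup\sum_{k=1}^{m}|f(\xi_k)-f(\xi_{k-1})|\,\phi(\xi_{k-1})$, the supremum over all $m\in\mathbb{N}$ and all finite increasing sequences $\xi_0<\xi_1<\dots<\xi_m$ of non-negative reals with $\operatorname{supp}f\subset[\xi_0,\xi_m]$. *)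

theory Defs
  imports "HOL-Analysis.Analysis" "HOL-Probability.Probability"
begin

definition nu :: "(real \<Rightarrow> real) \<Rightarrow> real measure" where
  "nu \<phi> = density lborel (\<lambda>x. indicator {0..} x * ennreal (\<phi> x))"

definition nbhd :: "real set \<Rightarrow> real \<Rightarrow> real set" where
  "nbhd A r = {x. 0 \<le> x \<and> (\<exists>y\<in>A. dist x y < r)}"

definition nu_plus :: "(real \<Rightarrow> real) \<Rightarrow> real set \<Rightarrow> ereal" where
  "nu_plus \<phi> A = Liminf (at_right 0)
     (\<lambda>r. (enn2ereal (emeasure (nu \<phi>) (nbhd A r)) - enn2ereal (emeasure (nu \<phi>) A)) / ereal r)"

definition lower_isoperimetric :: "(real \<Rightarrow> real) \<Rightarrow> (real \<Rightarrow> real) \<Rightarrow> bool" where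
  "lower_isoperimetric \<phi> J \<longleftrightarrow>
     (\<forall>A \<in> sets borel. A \<subseteq> {0..} \<longrightarrow> emeasure (nu \<phi>) A < \<infinity> \<longrightarrow>
        nu_plus \<phi> A \<ge> ereal (J (enn2real (emeasure (nu \<phi>) A))))"

definition supp :: "(real \<Rightarrow> real) \<Rightarrow> real set" where
  "supp f = closure {x. 0 \<le> x \<and> f x \<noteq> 0}"

definition V_nu :: "(real \<Rightarrow> real) \<Rightarrow> (real \<Rightarrow> real) \<Rightarrow> ereal" where
  "V_nu \<phi> f = Sup {ereal (\<Sum>k\<in>{1..m}. \<bar>f (\<xi> k) - f (\<xi> (k - 1))\<bar> * \<phi> (\<xi> (k - 1))) | (m::nat) (\<xi>::nat \<Rightarrow> real).
      1 \<le> m \<and> 0 \<le> \<xi> 0 \<and> strict_mono_on {0..m} \<xi> \<and> supp f \<subseteq> {\<xi> 0..\<xi> m}}"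

text \<open>Evaluation of a function K on R_+ at a value in [0,inf]; at inf we take the
  supremum of K (the monotone extension).\<close>
definition ext_at :: "(real \<Rightarrow> real) \<Rightarrow> ennreal \<Rightarrow> ereal" where
  "ext_at K x = (if x = \<infinity> then (SUP y\<in>{0..}. ereal (K y)) else ereal (K (enn2real x)))"

end

theory Submission
  imports Defs
begin

lemma g_meas:
  fixes \<phi> :: "real \<Rightarrow> real"
  assumes "continuous_on {0..} \<phi>"
  shows "(\<lambda>x. indicator {0..} x * ennreal (\<phi> x)) \<in> borel_measurable borel"
proof -
  have eq: "(\<lambda>x. indicator {0..} x * ennreal (\<phi> x)) = (\<lambda>x. indicator {0..} x * ennreal (\<phi> (max 0 x)))"
    by (rule ext) (auto simp: indicator_def max_def)
  have "continuous_on UNIV (\<lambda>x::real. \<phi> (max 0 x))"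
    by (rule continuous_on_compose2[OF assms]) (auto intro!: continuous_intros)
  hence "(\<lambda>x::real. \<phi> (max 0 x)) \<in> borel_measurable borel"
    by (rule borel_measurable_continuous_onI)
  thus ?thesis unfolding eq by measurable
qed

lemma sets_nu[simp]: "sets (nu \<phi>) = sets borel"
  unfolding nu_def by simp

lemma nu_bound:
  fixes \<phi> :: "real \<Rightarrow> real"
  assumes phic: "continuous_on {0..} \<phi>"
    and S: "S \<in> sets borel" "S \<subseteq> {u..v}" and uv: "u \<le> v"
    and M: "\<And>x. x \<in> S \<Longrightarrow> 0 \<le> x \<Longrightarrow> \<phi> x \<le> M" "0 \<le> M"
  shows "emeasure (nu \<phi>) S \<le> ennreal (M * (v - u))"
proof -
  have "emeasure (nu \<phi>) S = (\<integral>\<^sup>+x. (indicator {0..} x * ennreal (\<phi> x)) * indicator S x \<partial>lborel)"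
    unfolding nu_def using S g_meas[OF phic]
    by (subst emeasure_density) auto
  also have "\<dots> \<le> (\<integral>\<^sup>+x. ennreal M * indicator {u..v} x \<partial>lborel)"
  proof (rule nn_integral_mono)
    fix x
    show "indicator {0..} x * ennreal (\<phi> x) * indicator S x \<le> ennreal M * indicator {u..v} x"
      using M S by (auto simp: indicator_def intro!: ennreal_leI)
  qed
  also have "\<dots> = ennreal M * ennreal (v - u)"
    using uv by (simp add: nn_integral_cmult_indicator)
  also have "\<dots> = ennreal (M * (v - u))"
    using M uv by (simp add: ennreal_mult)
  finally show ?thesis .
qed

lemma nu_fin:
  fixes \<phi> :: "real \<Rightarrow> real"
  assumes phic: "continuous_on {0..} \<phi>" and rs: "0 \<le> r" "r \<le> s"
  shows "emeasure (nu \<phi>) {r..s} < \<infinity>" "emeasure (nu \<phi>) {r..<s} < \<infinity>"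
proof -
  have "continuous_on {r..s} \<phi>" using rs by (intro continuous_on_subset[OF phic]) auto
  then obtain x where "x \<in> {r..s}" "\<forall>y\<in>{r..s}. \<phi> y \<le> \<phi> x"
    using continuous_attains_sup[of "{r..s}" \<phi>] rs by auto
  hence "emeasure (nu \<phi>) {r..s} \<le> ennreal (max 0 (\<phi> x) * (s - r))"
    using rs by (intro nu_bound[OF phic]) (auto simp: le_max_iff_disj)
  thus 1: "emeasure (nu \<phi>) {r..s} < \<infinity>"
    using le_less_trans by fastforce
  have "emeasure (nu \<phi>) {r..<s} \<le> emeasure (nu \<phi>) {r..s}"
    by (rule emeasure_mono) auto
  thus "emeasure (nu \<phi>) {r..<s} < \<infinity>" using 1 by auto
qed

lemma nbhd_eq:
  assumes "0 < e" "r < s" "0 \<le> r"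
  shows "nbhd {r..<s} e = ({0..} \<inter> {r-e<..<r}) \<union> {r..<s} \<union> {s..<s+e}"
proof (rule set_eqI)
  fix x
  show "x \<in> nbhd {r..<s} e \<longleftrightarrow> x \<in> ({0..} \<inter> {r-e<..<r}) \<union> {r..<s} \<union> {s..<s+e}"
  proof
    assume "x \<in> nbhd {r..<s} e"
    then obtain y where "0 \<le> x" "r \<le> y" "y < s" "\<bar>x - y\<bar> < e"
      unfolding nbhd_def dist_real_def by auto
    thus "x \<in> ({0..} \<inter> {r-e<..<r}) \<union> {r..<s} \<union> {s..<s+e}" by auto
  next
    assume x: "x \<in> ({0..} \<inter> {r-e<..<r}) \<union> {r..<s} \<union> {s..<s+e}"
    show "x \<in> nbhd {r..<s} e"
    proof (cases "x \<in> {s..<s+e}")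
      case True
      let ?y = "max r ((x - e + s)/2)"
      have "?y \<in> {r..<s}" "dist x ?y < e" using True assms by (auto simp: dist_real_def max_def field_simps)
      moreover have "0 \<le> x" using True assms by auto
      ultimately show ?thesis unfolding nbhd_def by blast
    next
      case False
      thus ?thesis using x assms unfolding nbhd_def
        by (auto simp: dist_real_def intro: bexI[of _ r] bexI[of _ x])
    qed
  qed
qed

lemma cont_at:
  fixes \<phi> :: "real \<Rightarrow> real"
  assumes phic: "continuous_on {0..} \<phi>" and "0 \<le> a" "0 < e"
  obtains d where "d > 0" "\<And>x. 0 \<le> x \<Longrightarrow> \<bar>x - a\<bar> < d \<Longrightarrow> \<bar>\<phi> x - \<phi> a\<bar> < e"
  using phic assms unfolding continuous_on_iff dist_real_def by (metis atLeast_iff)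

lemma nu_plus_le:
  fixes \<phi> :: "real \<Rightarrow> real"
  assumes phic: "continuous_on {0..} \<phi>" and rs: "0 \<le> r" "r < s"
    and phi_nonneg: "\<And>x. 0 \<le> x \<Longrightarrow> 0 \<le> \<phi> x"
  shows "nu_plus \<phi> {r..<s} \<le> ereal ((if 0 < r then \<phi> r else 0) + \<phi> s)"
proof (rule ereal_le_epsilon2)
  fix e :: real assume e: "0 < e"
  define cr where "cr = (if 0 < r then \<phi> r else 0)"
  obtain d1 where d1: "d1 > 0" "\<And>x. 0 \<le> x \<Longrightarrow> \<bar>x - r\<bar> < d1 \<Longrightarrow> \<bar>\<phi> x - \<phi> r\<bar> < e/2"
    using cont_at[OF phic rs(1), of "e/2"] e by auto
  obtain d2 where d2: "d2 > 0" "\<And>x. 0 \<le> x \<Longrightarrow> \<bar>x - s\<bar> < d2 \<Longrightarrow> \<bar>\<phi> x - \<phi> s\<bar> < e/2"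
    using cont_at[OF phic _, of s "e/2"] e rs by auto
  let ?A = "{r..<s}"
  obtain mA where mA: "emeasure (nu \<phi>) ?A = ennreal mA" "0 \<le> mA"
    using nu_fin(2)[OF phic rs(1), of s] rs by (cases "emeasure (nu \<phi>) ?A") auto
  have ev: "\<forall>\<^sub>F t in at_right 0. (enn2ereal (emeasure (nu \<phi>) (nbhd ?A t)) - enn2ereal (emeasure (nu \<phi>) ?A)) / ereal t
      \<le> ereal (cr + \<phi> s + e)"
    unfolding eventually_at_right_field
  proof (intro exI[of _ "min d1 d2"] conjI allI impI)
    show "0 < min d1 d2" using d1 d2 by auto
    fix t :: real assume t: "0 < t" "t < min d1 d2"
    let ?L = "{0..} \<inter> {r-t<..<r}" and ?R = "{s..<s+t}"
    have eL: "emeasure (nu \<phi>) ?L \<le> ennreal ((cr + e/2) * t)"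
    proof (cases "0 < r")
      case True
      have "emeasure (nu \<phi>) ?L \<le> ennreal ((\<phi> r + e/2) * (r - (r - t)))"
      proof (rule nu_bound[OF phic])
        fix x assume x: "x \<in> ?L" "0 \<le> x"
        have "\<bar>x - r\<bar> < d1" using x t by auto
        from d1(2)[OF x(2) this] show "\<phi> x \<le> \<phi> r + e/2" unfolding abs_less_iff by linarith
      qed (use t e rs phi_nonneg[of r] in auto)
      thus ?thesis using True by (simp add: cr_def)
    next
      case False
      hence "?L = {}" using rs by auto
      thus ?thesis using e t rs False by (simp add: cr_def)
    qed
    have eR: "emeasure (nu \<phi>) ?R \<le> ennreal ((\<phi> s + e/2) * (s + t - s))"
    proof (rule nu_bound[OF phic])
        fix x assume x: "x \<in> ?R" "0 \<le> x"
        have "\<bar>x - s\<bar> < d2" using x t by auto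
        from d2(2)[OF x(2) this] show "\<phi> x \<le> \<phi> s + e/2" unfolding abs_less_iff by linarith
    qed (use t e rs phi_nonneg[of s] in auto)
    have crn: "0 \<le> cr" using phi_nonneg rs by (simp add: cr_def)
    obtain mL where mL: "emeasure (nu \<phi>) ?L = ennreal mL" "0 \<le> mL" "mL \<le> (cr + e/2) * t"
      using eL crn e t by (cases "emeasure (nu \<phi>) ?L") (auto simp: ennreal_le_iff top_unique)
    have sn: "0 \<le> \<phi> s" using phi_nonneg rs by simp
    obtain mR where mR: "emeasure (nu \<phi>) ?R = ennreal mR" "0 \<le> mR" "mR \<le> (\<phi> s + e/2) * t"
      using eR sn e t by (cases "emeasure (nu \<phi>) ?R") (auto simp: ennreal_le_iff top_unique)
    have "emeasure (nu \<phi>) (nbhd ?A t) = emeasure (nu \<phi>) (?L \<union> ?A \<union> ?R)"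
      using nbhd_eq[OF t(1) rs(2) rs(1)] by simp
    also have "\<dots> = emeasure (nu \<phi>) (?L \<union> ?A) + emeasure (nu \<phi>) ?R"
      by (rule plus_emeasure[symmetric]) (use rs in auto)
    also have "emeasure (nu \<phi>) (?L \<union> ?A) = emeasure (nu \<phi>) ?L + emeasure (nu \<phi>) ?A"
      by (rule plus_emeasure[symmetric]) auto
    finally have N: "emeasure (nu \<phi>) (nbhd ?A t) = ennreal (mL + mA + mR)"
      using mL mA mR by (simp add: ennreal_plus)
    have N2: "enn2ereal (emeasure (nu \<phi>) (nbhd ?A t)) = ereal (mL + mA + mR)"
      unfolding N using mL mA mR by (intro enn2ereal_ennreal) simp
    have N3: "enn2ereal (emeasure (nu \<phi>) ?A) = ereal mA"
      unfolding mA(1) using mA by (intro enn2ereal_ennreal) simp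
    have "(enn2ereal (emeasure (nu \<phi>) (nbhd ?A t)) - enn2ereal (emeasure (nu \<phi>) ?A)) / ereal t
        = ereal ((mL + mR) / t)"
      unfolding N2 N3 using t by simp
    also have "(mL + mR) / t \<le> cr + \<phi> s + e"
      using mL mR t by (simp add: divide_simps) (simp add: algebra_simps)
    finally show "(enn2ereal (emeasure (nu \<phi>) (nbhd ?A t)) - enn2ereal (emeasure (nu \<phi>) ?A)) / ereal t
        \<le> ereal (cr + \<phi> s + e)" by simp
  qed
  have "nu_plus \<phi> ?A \<le> Limsup (at_right 0) (\<lambda>t. (enn2ereal (emeasure (nu \<phi>) (nbhd ?A t)) - enn2ereal (emeasure (nu \<phi>) ?A)) / ereal t)"
    unfolding nu_plus_def by (rule Liminf_le_Limsup) simp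
  also have "\<dots> \<le> ereal (cr + \<phi> s + e)"
    by (rule Limsup_bounded[OF ev])
  finally show "nu_plus \<phi> {r..<s} \<le> ereal ((if 0 < r then \<phi> r else 0) + \<phi> s) + ereal e"
    by (simp add: cr_def)
qed

lemma V_ge:
  fixes m :: nat and \<xi> :: "nat \<Rightarrow> real" and f \<phi> :: "real \<Rightarrow> real"
  assumes "1 \<le> m" "0 \<le> \<xi> 0" "strict_mono_on {0..m} \<xi>" "supp f \<subseteq> {\<xi> 0..\<xi> m}"
  shows "ereal (\<Sum>k\<in>{1..m}. \<bar>f (\<xi> k) - f (\<xi> (k - 1))\<bar> * \<phi> (\<xi> (k - 1))) \<le> V_nu \<phi> f"
  unfolding V_nu_def
  apply (rule Sup_upper)
  apply (simp only: mem_Collect_eq)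
  apply (rule exI[of _ m], rule exI[of _ \<xi>])
  using assms by simp

lemma supp_sub: "supp (\<lambda>x. b * indicator {r..<s} x) \<subseteq> {r..s}"
  unfolding supp_def by (rule closure_minimal) (auto simp: indicator_def)

lemma V_nonneg:
  fixes \<phi> :: "real \<Rightarrow> real"
  assumes phi_nonneg: "\<And>x. 0 \<le> x \<Longrightarrow> 0 \<le> \<phi> x" and rs: "0 \<le> r" "r < s"
    and f_def: "f = (\<lambda>x. b * indicator {r..<s} x)"
  shows "0 \<le> V_nu \<phi> f"
proof -
  define \<xi> where "\<xi> = (\<lambda>k::nat. if k = 0 then r else s)"
  have "ereal (\<Sum>k\<in>{1..1}. \<bar>f (\<xi> k) - f (\<xi> (k - 1))\<bar> * \<phi> (\<xi> (k - 1))) \<le> V_nu \<phi> f"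
  proof (rule V_ge)
    show "strict_mono_on {0..1} \<xi>" using rs by (auto simp: strict_mono_on_def \<xi>_def)
    show "supp f \<subseteq> {\<xi> 0..\<xi> 1}" using supp_sub f_def by (simp add: \<xi>_def)
  qed (use rs in \<open>auto simp: \<xi>_def\<close>)
  moreover have "0 \<le> (\<Sum>k\<in>{1..1}. \<bar>f (\<xi> k) - f (\<xi> (k - 1))\<bar> * \<phi> (\<xi> (k - 1)))"
    using phi_nonneg[of r] rs by (simp add: \<xi>_def)
  ultimately show ?thesis by (meson ereal_less_eq(5) order_trans)
qed

lemma V_lower:
  fixes \<phi> :: "real \<Rightarrow> real"
  assumes phic: "continuous_on {0..} \<phi>" and phi_nonneg: "\<And>x. 0 \<le> x \<Longrightarrow> 0 \<le> \<phi> x"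
    and rs: "0 \<le> r" "r < s" and b: "0 < b"
    and f_def: "f = (\<lambda>x. b * indicator {r..<s} x)"
  shows "ereal (b * ((if 0 < r then \<phi> r else 0) + \<phi> s)) \<le> V_nu \<phi> f"
proof (rule ereal_le_epsilon2)
  fix e :: real assume e: "0 < e"
  define \<delta> where "\<delta> = e / (2 * b)"
  have \<delta>: "0 < \<delta>" "2 * b * \<delta> = e" using e b by (auto simp: \<delta>_def)
  obtain d1 where d1: "d1 > 0" "\<And>x. 0 \<le> x \<Longrightarrow> \<bar>x - r\<bar> < d1 \<Longrightarrow> \<bar>\<phi> x - \<phi> r\<bar> < \<delta>"
    using cont_at[OF phic rs(1) \<delta>(1)] by auto
  obtain d2 where d2: "d2 > 0" "\<And>x. 0 \<le> x \<Longrightarrow> \<bar>x - s\<bar> < d2 \<Longrightarrow> \<bar>\<phi> x - \<phi> s\<bar> < \<delta>"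
    using cont_at[OF phic _ \<delta>(1), of s] rs by auto
  have fs: "supp f \<subseteq> {r..s}" using supp_sub f_def by simp
  show "ereal (b * ((if 0 < r then \<phi> r else 0) + \<phi> s)) \<le> V_nu \<phi> f + ereal e"
  proof (cases "0 < r")
    case True
    define \<epsilon> where "\<epsilon> = min (min d1 d2) (min (s - r) r) / 2"
    have \<epsilon>: "0 < \<epsilon>" "\<epsilon> < d1" "\<epsilon> < d2" "\<epsilon> < s - r" "\<epsilon> < r"
      using True rs d1 d2 by (auto simp: \<epsilon>_def)
    define \<xi> where "\<xi> = (\<lambda>k::nat. if k = 0 then r - \<epsilon> else if k = 1 then r else if k = 2 then s - \<epsilon> else s)"
    have i03: "{0..3::nat} = {0,1,2,3}" "{1..3::nat} = {1,2,3}" by auto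
    have "ereal (\<Sum>k\<in>{1..3}. \<bar>f (\<xi> k) - f (\<xi> (k - 1))\<bar> * \<phi> (\<xi> (k - 1))) \<le> V_nu \<phi> f"
    proof (rule V_ge)
      show "strict_mono_on {0..3} \<xi>" unfolding i03 using \<epsilon> by (auto simp: strict_mono_on_def \<xi>_def)
      show "supp f \<subseteq> {\<xi> 0..\<xi> 3}" using fs \<epsilon> by (auto simp: \<xi>_def)
    qed (use \<epsilon> in \<open>auto simp: \<xi>_def\<close>)
    moreover have "(\<Sum>k\<in>{1..3}. \<bar>f (\<xi> k) - f (\<xi> (k - 1))\<bar> * \<phi> (\<xi> (k - 1)))
        = b * \<phi> (r - \<epsilon>) + b * \<phi> (s - \<epsilon>)"
      unfolding i03 using \<epsilon> b by (simp add: \<xi>_def f_def indicator_def)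
    moreover have "\<phi> r - \<delta> \<le> \<phi> (r - \<epsilon>)"
      using d1(2)[of "r - \<epsilon>"] \<epsilon> unfolding abs_less_iff by auto
    moreover have "\<phi> s - \<delta> \<le> \<phi> (s - \<epsilon>)"
      using d2(2)[of "s - \<epsilon>"] \<epsilon> rs unfolding abs_less_iff by auto
    ultimately show ?thesis
    proof -
      assume V: "ereal (\<Sum>k\<in>{1..3}. \<bar>f (\<xi> k) - f (\<xi> (k - 1))\<bar> * \<phi> (\<xi> (k - 1))) \<le> V_nu \<phi> f"
        and S: "(\<Sum>k\<in>{1..3}. \<bar>f (\<xi> k) - f (\<xi> (k - 1))\<bar> * \<phi> (\<xi> (k - 1))) = b * \<phi> (r - \<epsilon>) + b * \<phi> (s - \<epsilon>)"
        and h1: "\<phi> r - \<delta> \<le> \<phi> (r - \<epsilon>)" and h2: "\<phi> s - \<delta> \<le> \<phi> (s - \<epsilon>)"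
      have "b * (\<phi> r - \<delta>) \<le> b * \<phi> (r - \<epsilon>)" "b * (\<phi> s - \<delta>) \<le> b * \<phi> (s - \<epsilon>)"
        using h1 h2 b by (auto intro: mult_left_mono)
      hence "b * ((if 0 < r then \<phi> r else 0) + \<phi> s) \<le> (b * \<phi> (r - \<epsilon>) + b * \<phi> (s - \<epsilon>)) + e"
        using True \<delta>(2) by (simp add: algebra_simps)
      hence "ereal (b * ((if 0 < r then \<phi> r else 0) + \<phi> s)) \<le> ereal (b * \<phi> (r - \<epsilon>) + b * \<phi> (s - \<epsilon>)) + ereal e"
        by simp
      also have "\<dots> \<le> V_nu \<phi> f + ereal e" using V S by (intro add_right_mono) simp
      finally show ?thesis .
    qed
  next
    case False
    hence r0: "r = 0" using rs by simp
    define \<epsilon> where "\<epsilon> = min d2 (s - r) / 2"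
    have \<epsilon>: "0 < \<epsilon>" "\<epsilon> < d2" "\<epsilon> < s - r"
      using rs d2 by (auto simp: \<epsilon>_def)
    define \<xi> where "\<xi> = (\<lambda>k::nat. if k = 0 then r else if k = 1 then s - \<epsilon> else s)"
    have i03: "{0..2::nat} = {0,1,2}" "{1..2::nat} = {1,2}" by auto
    have "ereal (\<Sum>k\<in>{1..2}. \<bar>f (\<xi> k) - f (\<xi> (k - 1))\<bar> * \<phi> (\<xi> (k - 1))) \<le> V_nu \<phi> f"
    proof (rule V_ge)
      show "strict_mono_on {0..2} \<xi>" unfolding i03 using \<epsilon> by (auto simp: strict_mono_on_def \<xi>_def)
      show "supp f \<subseteq> {\<xi> 0..\<xi> 2}" using fs \<epsilon> by (auto simp: \<xi>_def)
    qed (use \<epsilon> rs in \<open>auto simp: \<xi>_def\<close>)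
    moreover have "(\<Sum>k\<in>{1..2}. \<bar>f (\<xi> k) - f (\<xi> (k - 1))\<bar> * \<phi> (\<xi> (k - 1)))
        = b * \<phi> (s - \<epsilon>)"
      unfolding i03 using \<epsilon> b by (simp add: \<xi>_def f_def indicator_def)
    moreover have "\<phi> s - \<delta> \<le> \<phi> (s - \<epsilon>)"
      using d2(2)[of "s - \<epsilon>"] \<epsilon> rs unfolding abs_less_iff by auto
    ultimately show ?thesis
    proof -
      assume V: "ereal (\<Sum>k\<in>{1..2}. \<bar>f (\<xi> k) - f (\<xi> (k - 1))\<bar> * \<phi> (\<xi> (k - 1))) \<le> V_nu \<phi> f"
        and S: "(\<Sum>k\<in>{1..2}. \<bar>f (\<xi> k) - f (\<xi> (k - 1))\<bar> * \<phi> (\<xi> (k - 1))) = b * \<phi> (s - \<epsilon>)"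
        and h2: "\<phi> s - \<delta> \<le> \<phi> (s - \<epsilon>)"
      have "b * (\<phi> s - \<delta>) \<le> b * \<phi> (s - \<epsilon>)"
        using h2 b by (auto intro: mult_left_mono)
      hence "b * ((if 0 < r then \<phi> r else 0) + \<phi> s) \<le> b * \<phi> (s - \<epsilon>) + e"
      proof -
        have "b * ((if 0 < r then \<phi> r else 0) + \<phi> s) = b * (\<phi> s - \<delta>) + b * \<delta>"
          using False by (simp add: algebra_simps)
        moreover have "b * \<delta> \<le> e"
        proof -
          have "0 < b * \<delta>" using \<delta> b by simp
          thus ?thesis using \<delta>(2) by linarith
        qed
        ultimately show ?thesis using \<open>b * (\<phi> s - \<delta>) \<le> b * \<phi> (s - \<epsilon>)\<close> by linarith
      qed
      hence "ereal (b * ((if 0 < r then \<phi> r else 0) + \<phi> s)) \<le> ereal (b * \<phi> (s - \<epsilon>)) + ereal e"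
        by simp
      also have "\<dots> \<le> V_nu \<phi> f + ereal e" using V S by (intro add_right_mono) simp
      finally show ?thesis .
    qed
  qed
qed

lemma space_nu[simp]: "space (nu \<phi>) = UNIV"
  unfolding nu_def by simp

theorem lemma2p4:
  fixes \<phi> I J K L :: "real \<Rightarrow> real"
  assumes phi_cont: "continuous_on {0..} \<phi>"
    and phi_nonneg: "\<And>x. 0 \<le> x \<Longrightarrow> 0 \<le> \<phi> x"
    and I_nonneg: "\<And>x. 0 \<le> x \<Longrightarrow> 0 \<le> I x"
    and J_nonneg: "\<And>x. 0 \<le> x \<Longrightarrow> 0 \<le> J x"
    and K_nonneg: "\<And>x. 0 \<le> x \<Longrightarrow> 0 \<le> K x"
    and L_nonneg: "\<And>x. 0 \<le> x \<Longrightarrow> 0 \<le> L x"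
    and IJKL: "\<And>a b. 0 \<le> a \<Longrightarrow> 0 \<le> b \<Longrightarrow> I (a * b) \<le> b * J a + K (a * L b)"
    and J_iso: "lower_isoperimetric \<phi> J"
    and K_mono: "mono_on {0..} K"
    and K_concave: "concave_on {0..} K"
    and L_concave: "concave_on {0..} L"
    and b: "0 \<le> b" and rs: "0 \<le> r" "r < s"
    and f_def: "f = (\<lambda>x. b * indicator {r..<s} x)"
  shows "ereal (I (integral\<^sup>L (nu \<phi>) f))
           \<le> ext_at K (\<integral>\<^sup>+ x. ennreal (L (f x)) \<partial>nu \<phi>) + V_nu \<phi> f"
proof -
  let ?A = "{r..<s}"
  define c where "c = (if 0 < r then \<phi> r else 0) + \<phi> s"
  have Afin: "emeasure (nu \<phi>) ?A < \<infinity>" using nu_fin(2)[OF phi_cont rs(1), of s] rs by simp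
  obtain a where a: "emeasure (nu \<phi>) ?A = ennreal a" "0 \<le> a"
    using Afin by (cases "emeasure (nu \<phi>) ?A") auto
  have ea: "enn2real (emeasure (nu \<phi>) ?A) = a" using a by simp
  have int: "integral\<^sup>L (nu \<phi>) f = b * a"
    unfolding f_def by (simp add: integral_mult_right_zero measure_def a)
  have "ereal (J a) \<le> nu_plus \<phi> ?A"
  proof -
    have "?A \<in> sets borel" "?A \<subseteq> {0..}" using rs by auto
    thus ?thesis using J_iso Afin unfolding lower_isoperimetric_def ea[symmetric] by blast
  qed
  also have "\<dots> \<le> ereal c" unfolding c_def by (rule nu_plus_le[OF phi_cont rs phi_nonneg])
  finally have Jle: "J a \<le> c" by simp
  have bJ: "ereal (b * J a) \<le> V_nu \<phi> f"
  proof (cases "b = 0")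
    case True
    thus ?thesis using V_nonneg[OF phi_nonneg rs f_def] by (simp add: zero_ereal_def)
  next
    case False
    hence b0: "0 < b" using b by simp
    have "ereal (b * J a) \<le> ereal (b * c)" using Jle b by (simp add: mult_left_mono)
    also have "\<dots> \<le> V_nu \<phi> f" unfolding c_def by (rule V_lower[OF phi_cont phi_nonneg rs b0 f_def])
    finally show ?thesis .
  qed
  define N where "N = (\<integral>\<^sup>+ x. ennreal (L (f x)) \<partial>nu \<phi>)"
  have Lb: "0 \<le> L b" using L_nonneg b by simp
  have "ennreal (L b) * emeasure (nu \<phi>) ?A = (\<integral>\<^sup>+ x. ennreal (L b) * indicator ?A x \<partial>nu \<phi>)"
    by (simp add: nn_integral_cmult_indicator)
  also have "\<dots> \<le> N" unfolding N_def
    by (rule nn_integral_mono) (auto simp: f_def indicator_def)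
  finally have aL: "ennreal (a * L b) \<le> N" using a Lb by (simp add: ennreal_mult mult.commute)
  have KE: "ereal (K (a * L b)) \<le> ext_at K N"
  proof (cases "N = \<infinity>")
    case True
    thus ?thesis unfolding ext_at_def using a Lb by (auto intro!: SUP_upper)
  next
    case False
    have "a * L b = enn2real (ennreal (a * L b))" using a Lb by simp
    also have "\<dots> \<le> enn2real N" using aL False by (intro enn2real_mono) (auto simp: top.not_eq_extremum)
    finally have "K (a * L b) \<le> K (enn2real N)"
      using a Lb by (intro mono_onD[OF K_mono]) auto
    thus ?thesis unfolding ext_at_def using False by simp
  qed
  have "I (integral\<^sup>L (nu \<phi>) f) = I (a * b)" by (simp add: int mult.commute)
  also have "\<dots> \<le> b * J a + K (a * L b)" using IJKL[OF a(2) b] .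
  finally have "ereal (I (integral\<^sup>L (nu \<phi>) f)) \<le> ereal (b * J a) + ereal (K (a * L b))" by simp
  also have "\<dots> \<le> V_nu \<phi> f + ext_at K N" by (rule add_mono[OF bJ KE])
  finally show ?thesis unfolding N_def by (simp add: add.commute)
qed

end
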